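(* For any finite quasi-discrete closure model $\mathcal{M}=((X,\mathcal{C}_R),\mathcal{V})$, any SLCS formula $\phi$ and any $x\in X$: $x\in\mathtt{Sat}(\mathcal{M},\phi)$ if and only if $\mathcal{M},x\models\phi$.
   Context: For $R\subseteq X\times X$, $\mathcal{C}_R(A)=A\cup\{x\mid\exists a\in A.(a,x)\in R\}$; a finite quasi-discrete closure model is $((X,\mathcal{C}_R),\mathcal{V})$ with $X$ finite and $\mathcal{V}:AP\to 2^X$. Paths are continuous maps $p:(\mathbb{N},\mathcal{C}_\succ)\to(X,\mathcal{C}_R)$, where $\succ=\{(n,n+1)\}$ and continuity means $p(\mathcal{C}_\succ(S))\subseteq\mathcal{C}_R(p(S))$ for all $S\subseteq\mathbb{N}$. SLCS formulas: $\Phi::=a\mid\top\mid\lnot\Phi\mid\Phi\land\Phi\mid\mathcal{N}\Phi\mid\Phi\,\mathcal{S}\,\Phi\mid\Phi\rightsquigarrow\Phi$. Semantics: $x\models a$ iff $x\in\mathcal{V}(a)$; boolean connectives classically; $x\models\mathcal{N}\phi$ iff $x\in\mathcal{C}_R(\{y\mid y\models\phi\})$; $x\models\phi_1\,\mathcal{S}\,\phi_2$ iff $x\models\phi_1$ and for every path $p$ with $p(0)=x$ and every $l\in\mathbb{N}$, if $p(l)\models\lnot\phi_1$ then some $k$ with $0<k\le l$ has $p(k)\models\phi_2$; $x\models\phi_1\rightsquigarrow\phi_2$ iff $x\models\phi_2$ and there exist $y$, a path $p$ and $l$ with $p(0)=y$, $p(l)=x$, $y\models\phi_1$ and $p(i)\models\phi_2$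 for all $0<i<l$. Let $\mathit{pre}(x)=\{y\mid(y,x)\in R\}$, $\mathit{post}(x)=\{y\mid(x,y)\in R\}$. The procedure $\mathtt{Sat}(\mathcal{M},\phi)$ is defined recursively: $\top\mapsto X$; $a\mapsto\mathcal{V}(a)$; $\lnot\phi_1\mapsto X\setminus\mathtt{Sat}(\mathcal{M},\phi_1)$; $\phi_1\land\phi_2\mapsto\mathtt{Sat}(\mathcal{M},\phi_1)\cap\mathtt{Sat}(\mathcal{M},\phi_2)$; $\mathcal{N}\phi_1\mapsto\mathcal{C}_R(\mathtt{Sat}(\mathcal{M},\phi_1))$. For $\phi_1\,\mathcal{S}\,\phi_2$: $V:=\mathtt{Sat}(\mathcal{M},\phi_1)$, $Q:=\mathtt{Sat}(\mathcal{M},\phi_2)$, $T:=\mathcal{C}_R(V\cup Q)\setminus(V\cup Q)$; while $T\neq\emptyset$: $T':=\emptyset$, for each $x\in T$ let $N:=\mathit{pre}(x)\cap V$, set $V:=V\setminus N$, $T':=T'\cup(N\setminus Q)$; then $T:=T'$; return $V$. For $\phi_1\rightsquigarrow\phi_2$: $V:=\mathtt{Sat}(\mathcal{M},\phi_1)$, $Q:=\mathtt{Sat}(\mathcal{M},\phi_2)$, $T:=\mathcal{C}_R(V)\cap Q$, $S:=T$, $Q:=Q\setminus T$; while $T\neq\emptyset$: $T':=\emptyset$, for each $x\in T$ set $T':=T'\cup(Q\cap\mathit{post}(x))$; then $Q:=Q\setminus T'$, $S:=S\cup T'$, $T:=T'$; return $S$. *)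

theory Defs
  imports Main "HOL-Library.While_Combinator"
begin

definition closureR :: "('a \<times> 'a) set \<Rightarrow> 'a set \<Rightarrow> 'a set" where
  "closureR R A = A \<union> {x. \<exists>a\<in>A. (a, x) \<in> R}"

definition qdcm :: "'a set \<Rightarrow> ('a \<times> 'a) set \<Rightarrow> ('p \<Rightarrow> 'a set) \<Rightarrow> bool" where
  "qdcm X R V \<longleftrightarrow> finite X \<and> R \<subseteq> X \<times> X \<and> (\<forall>a. V a \<subseteq> X)"

definition succ_rel :: "(nat \<times> nat) set" where
  "succ_rel = {(n, n + 1) | n. True}"

text \<open>Paths: continuous maps (nat, C_succ) \<rightarrow> (X, C_R).\<close>
definition is_path :: "'a set \<Rightarrow> ('a \<times> 'a) set \<Rightarrow> (nat \<Rightarrow> 'a) \<Rightarrow> bool" where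
  "is_path X R p \<longleftrightarrow> (\<forall>n. p n \<in> X) \<and>
     (\<forall>S. p ` closureR succ_rel S \<subseteq> closureR R (p ` S))"

datatype 'p slcs =
    Atom 'p
  | Top
  | Neg "'p slcs"
  | And "'p slcs" "'p slcs"
  | Near "'p slcs"
  | Surr "'p slcs" "'p slcs"
  | Reach "'p slcs" "'p slcs"

fun models :: "'a set \<Rightarrow> ('a \<times> 'a) set \<Rightarrow> ('p \<Rightarrow> 'a set) \<Rightarrow> 'a \<Rightarrow> 'p slcs \<Rightarrow> bool" where
  "models X R V x (Atom a) = (x \<in> V a)"
| "models X R V x Top = True"
| "models X R V x (Neg f) = (\<not> models X R V x f)"
| "models X R V x (And f g) = (models X R V x f \<and> models X R V x g)"
| "models X R V x (Near f) = (x \<in> closureR R {y \<in> X. models X R V y f})"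
| "models X R V x (Surr f g) = (models X R V x f \<and>
     (\<forall>p l. is_path X R p \<and> p 0 = x \<and> \<not> models X R V (p l) f \<longrightarrow>
        (\<exists>k. 0 < k \<and> k \<le> l \<and> models X R V (p k) g)))"
| "models X R V x (Reach f g) = (models X R V x g \<and>
     (\<exists>y p l. y \<in> X \<and> is_path X R p \<and> p 0 = y \<and> p l = x \<and> models X R V y f \<and>
        (\<forall>i. 0 < i \<and> i < l \<longrightarrow> models X R V (p i) g)))"

definition pre :: "'a set \<Rightarrow> ('a \<times> 'a) set \<Rightarrow> 'a \<Rightarrow> 'a set" where
  "pre X R x = {y \<in> X. (y, x) \<in> R}"

definition post :: "'a set \<Rightarrow> ('a \<times> 'a) set \<Rightarrow> 'a \<Rightarrow> 'a set" where
  "post X R x = {y \<in> X. (x, y) \<in> R}"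

text \<open>The "for each x in T" loops iterate over some (arbitrarily chosen) duplicate-free
  enumeration of the finite set T.\<close>
definition enum_set :: "'a set \<Rightarrow> 'a list" where
  "enum_set T = (SOME xs. set xs = T \<and> distinct xs)"

definition surr_inner :: "'a set \<Rightarrow> ('a \<times> 'a) set \<Rightarrow> 'a set \<Rightarrow> 'a \<Rightarrow> 'a set \<times> 'a set \<Rightarrow> 'a set \<times> 'a set" where
  "surr_inner X R Q x st =
     (let (V, T') = st; N = pre X R x \<inter> V in (V - N, T' \<union> (N - Q)))"

definition surr_step :: "'a set \<Rightarrow> ('a \<times> 'a) set \<Rightarrow> 'a set \<Rightarrow> 'a set \<times> 'a set \<Rightarrow> 'a set \<times> 'a set" where
  "surr_step X R Q st =
     (let (V, T) = st; (V', T') = fold (surr_inner X R Q) (enum_set T) (V, {}) in (V', T'))"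

definition sat_surr :: "'a set \<Rightarrow> ('a \<times> 'a) set \<Rightarrow> 'a set \<Rightarrow> 'a set \<Rightarrow> 'a set" where
  "sat_surr X R V0 Q =
     fst (while (\<lambda>(V, T). T \<noteq> {}) (surr_step X R Q)
            (V0, closureR R (V0 \<union> Q) - (V0 \<union> Q)))"

definition reach_step :: "'a set \<Rightarrow> ('a \<times> 'a) set \<Rightarrow> 'a set \<times> 'a set \<times> 'a set \<Rightarrow> 'a set \<times> 'a set \<times> 'a set" where
  "reach_step X R st =
     (let (T, Q, S) = st;
          T' = fold (\<lambda>x T'. T' \<union> (Q \<inter> post X R x)) (enum_set T) {}
      in (T', Q - T', S \<union> T'))"

definition sat_reach :: "'a set \<Rightarrow> ('a \<times> 'a) set \<Rightarrow> 'a set \<Rightarrow> 'a set \<Rightarrow> 'a set" where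
  "sat_reach X R V0 Q0 =
     (let T = closureR R V0 \<inter> Q0
      in snd (snd (while (\<lambda>(T, Q, S). T \<noteq> {}) (reach_step X R) (T, Q0 - T, T))))"

fun Sat :: "'a set \<Rightarrow> ('a \<times> 'a) set \<Rightarrow> ('p \<Rightarrow> 'a set) \<Rightarrow> 'p slcs \<Rightarrow> 'a set" where
  "Sat X R V Top = X"
| "Sat X R V (Atom a) = V a"
| "Sat X R V (Neg f) = X - Sat X R V f"
| "Sat X R V (And f g) = Sat X R V f \<inter> Sat X R V g"
| "Sat X R V (Near f) = closureR R (Sat X R V f)"
| "Sat X R V (Surr f g) = sat_surr X R (Sat X R V f) (Sat X R V g)"
| "Sat X R V (Reach f g) = sat_reach X R (Sat X R V f) (Sat X R V g)"

end

theory Submission imports Defs begin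

lemma enum_set_set: "finite T \<Longrightarrow> set (enum_set T) = T"
  unfolding enum_set_def
  by (metis (mono_tags, lifting) finite_distinct_list someI_ex)

lemma fold_union: "fold (\<lambda>x A. A \<union> f x) xs B = B \<union> (\<Union>x\<in>set xs. f x)"
  by (induction xs arbitrary: B) auto

lemma fold_surr_inner:
  "fold (surr_inner X R Q) xs (V, A) =
     (V - (\<Union>x\<in>set xs. pre X R x), A \<union> ((V \<inter> (\<Union>x\<in>set xs. pre X R x)) - Q))"
  by (induction xs arbitrary: V A) (auto simp: surr_inner_def Let_def)

lemma surr_step_eq: "finite T \<Longrightarrow> surr_step X R Q (V, T) =
     (V - (\<Union>x\<in>T. pre X R x), (V \<inter> (\<Union>x\<in>T. pre X R x)) - Q)"
  by (simp add: surr_step_def fold_surr_inner enum_set_set)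

lemma reach_step_eq: "finite T \<Longrightarrow> reach_step X R (T, Q, S) =
     ((\<Union>x\<in>T. Q \<inter> post X R x), Q - (\<Union>x\<in>T. Q \<inter> post X R x), S \<union> (\<Union>x\<in>T. Q \<inter> post X R x))"
  by (simp add: reach_step_def fold_union enum_set_set)

lemma is_path_iff: "is_path X R p \<longleftrightarrow> (\<forall>n. p n \<in> X) \<and> (\<forall>n. p (Suc n) = p n \<or> (p n, p (Suc n)) \<in> R)"
proof
  assume h: "is_path X R p"
  show "(\<forall>n. p n \<in> X) \<and> (\<forall>n. p (Suc n) = p n \<or> (p n, p (Suc n)) \<in> R)"
  proof (intro conjI allI)
    fix n show "p n \<in> X" using h by (simp add: is_path_def)
    have "Suc n \<in> closureR succ_rel {n}" by (simp add: closureR_def succ_rel_def)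
    hence "p (Suc n) \<in> closureR R (p ` {n})" using h unfolding is_path_def by blast
    thus "p (Suc n) = p n \<or> (p n, p (Suc n)) \<in> R" by (simp add: closureR_def)
  qed
next
  assume h: "(\<forall>n. p n \<in> X) \<and> (\<forall>n. p (Suc n) = p n \<or> (p n, p (Suc n)) \<in> R)"
  show "is_path X R p" unfolding is_path_def
  proof (intro conjI allI subsetI)
    fix n show "p n \<in> X" using h by simp
  next
    fix S y assume "y \<in> p ` closureR succ_rel S"
    then obtain m where m: "m \<in> closureR succ_rel S" "y = p m" by blast
    show "y \<in> closureR R (p ` S)"
    proof (cases "m \<in> S")
      case True thus ?thesis using m by (simp add: closureR_def)
    next
      case False
      then obtain n where "n \<in> S" "m = Suc n" using m(1) by (auto simp: closureR_def succ_rel_def)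
      thus ?thesis using h m(2) by (auto simp: closureR_def)
    qed
  qed
qed

definition RelQ :: "('a \<times> 'a) set \<Rightarrow> 'a set \<Rightarrow> ('a \<times> 'a) set" where
  "RelQ R Q = {(a,b). (a,b) \<in> R \<and> b \<in> Q}"

lemma rtrancl_path:
  assumes "(a,b) \<in> (RelQ R S)\<^sup>*"
  shows "\<exists>p l. p 0 = a \<and> p l = b \<and> (\<forall>i<l. (p i, p (Suc i)) \<in> R) \<and> (\<forall>i. 0<i \<and> i\<le>l \<longrightarrow> p i \<in> S)"
  using assms
proof (induction rule: rtrancl_induct)
  case base
  show ?case by (rule exI[of _ "\<lambda>_. a"], rule exI[of _ 0]) auto
next
  case (step y z)
  then obtain p l where p: "p 0 = a" "p l = y" "\<forall>i<l. (p i, p (Suc i)) \<in> R" "\<forall>i. 0<i \<and> i\<le>l \<longrightarrow> p i \<in> S" by blast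
  have yz: "(y,z) \<in> R" "z \<in> S" using step(2) by (auto simp: RelQ_def)
  show ?case
  proof (rule exI[of _ "p(Suc l := z)"], rule exI[of _ "Suc l"], intro conjI allI impI)
    show "(p(Suc l := z)) 0 = a" using p by simp
    show "(p(Suc l := z)) (Suc l) = z" by simp
    fix i
    show "i < Suc l \<Longrightarrow> ((p(Suc l := z)) i, (p(Suc l := z)) (Suc i)) \<in> R"
      using p yz by (cases "i = l") auto
    show "0 < i \<and> i \<le> Suc l \<Longrightarrow> (p(Suc l := z)) i \<in> S"
      using p yz by (cases "i = Suc l") auto
  qed
qed

lemma rtrancl_is_path:
  assumes "(a,b) \<in> (RelQ R S)\<^sup>*" "a \<in> X" "R \<subseteq> X \<times> X"
  shows "\<exists>p l. is_path X R p \<and> p 0 = a \<and> p l = b \<and> (\<forall>i. 0<i \<and> i\<le>l \<longrightarrow> p i \<in> S)"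
proof -
  obtain p l where p: "p 0 = a" "p l = b" "\<forall>i<l. (p i, p (Suc i)) \<in> R" "\<forall>i. 0<i \<and> i\<le>l \<longrightarrow> p i \<in> S"
    using rtrancl_path[OF assms(1)] by blast
  define q where "q n = p (min n l)" for n
  have X: "q n \<in> X" for n
  proof (cases "min n l")
    case 0 thus ?thesis using p assms by (simp add: q_def)
  next
    case (Suc m) hence "(p m, p (Suc m)) \<in> R" using p by simp
    thus ?thesis using assms(3) Suc by (auto simp: q_def)
  qed
  have "q (Suc n) = q n \<or> (q n, q (Suc n)) \<in> R" for n
    using p by (cases "n < l") (auto simp: q_def min_def)
  hence "is_path X R q" using X by (simp add: is_path_iff)
  thus ?thesis using p by (intro exI[of _ q] exI[of _ l]) (auto simp: q_def)
qed


lemma reach_key: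
  assumes "(a,z) \<in> (RelQ R (Q\<union>T))\<^sup>*" "a \<in> T \<union> T'" "z \<notin> S \<union> T'" "T \<subseteq> S" "Q \<inter> S = {}"
    "T' = (\<Union>x\<in>T. Q \<inter> post X R x)" "Q \<subseteq> X"
  shows "\<exists>t'\<in>T'. (t',z) \<in> (RelQ R ((Q - T') \<union> T'))\<^sup>*"
proof -
  have "z \<notin> S \<union> T' \<longrightarrow> (\<exists>t'\<in>T'. (t',z) \<in> (RelQ R ((Q - T') \<union> T'))\<^sup>*)"
    using assms(1)
  proof (induction rule: rtrancl_induct)
    case base
    then show ?case using assms(2,4) by blast
  next
    case (step y z)
    show ?case
    proof
      assume z: "z \<notin> S \<union> T'"
      have yz: "(y,z) \<in> R" "z \<in> Q \<union> T" using step(2) by (auto simp: RelQ_def)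
      have zQ: "z \<in> Q" using yz z assms(4) by blast
      show "\<exists>t'\<in>T'. (t',z) \<in> (RelQ R ((Q - T') \<union> T'))\<^sup>*"
      proof (cases "y \<in> T'")
        case True
        have "(y,z) \<in> RelQ R ((Q - T') \<union> T')" using yz zQ z by (auto simp: RelQ_def)
        thus ?thesis using True by blast
      next
        case False
        have "y \<notin> T"
        proof
          assume "y \<in> T"
          hence "z \<in> T'" using assms(6,7) zQ yz by (auto simp: post_def)
          thus False using z by blast
        qed
        have "y \<noteq> a" using False \<open>y \<notin> T\<close> assms(2) by blast
        hence "y \<in> Q \<union> T" using step(1) by (auto elim: rtranclE simp: RelQ_def)
        hence "y \<notin> S \<union> T'" using \<open>y \<notin> T\<close> False assms(5) by blast
        then obtain t' where "t' \<in> T'" "(t',y) \<in> (RelQ R ((Q - T') \<union> T'))\<^sup>*" using step(3) by blast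
        moreover have "(y,z) \<in> RelQ R ((Q - T') \<union> T')" using yz zQ z by (auto simp: RelQ_def)
        ultimately show ?thesis by (meson rtrancl.rtrancl_into_rtrancl)
      qed
    qed
  qed
  thus ?thesis using assms(3) by blast
qed

lemma sat_reach_eq:
  assumes X: "finite X" "R \<subseteq> X \<times> X" "V0 \<subseteq> X" "Q0 \<subseteq> X"
  shows "sat_reach X R V0 Q0 = {z. \<exists>t\<in>closureR R V0 \<inter> Q0. (t,z) \<in> (RelQ R Q0)\<^sup>*}"
    (is "_ = ?Rch")
proof -
  define T0 where "T0 = closureR R V0 \<inter> Q0"
  define P where "P = (\<lambda>(T,Q,S). T \<subseteq> S \<and> S \<subseteq> ?Rch \<and> Q \<subseteq> Q0 \<and> Q \<inter> S = {} \<and> T \<subseteq> X \<and>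
     (\<forall>z\<in>?Rch - S. \<exists>t\<in>T. (t,z) \<in> (RelQ R (Q\<union>T))\<^sup>*))"
  have fin: "finite T" if "T \<subseteq> X" for T using X(1) finite_subset that by blast
  have "snd (snd (while (\<lambda>(T, Q, S). T \<noteq> {}) (reach_step X R) (T0, Q0 - T0, T0))) = ?Rch"
  proof (rule while_rule[where P = P and r = "measure (\<lambda>(T,Q,S). 2 * card Q + (if T = {} then 0 else 1))"])
    have e: "Q0 - T0 \<union> T0 = Q0" unfolding T0_def by blast
    show "P (T0, Q0 - T0, T0)"
      unfolding P_def split e
    proof (intro conjI)
      show "T0 \<subseteq> ?Rch" unfolding T0_def by blast
      show "T0 \<subseteq> X" unfolding T0_def using X by blast
      show "\<forall>z\<in>?Rch - T0. \<exists>t\<in>T0. (t, z) \<in> (RelQ R Q0)\<^sup>*" unfolding T0_def by blast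
    qed auto
  next
    fix s assume Ps: "P s" and b: "(\<lambda>(T, Q, S). T \<noteq> {}) s"
    obtain T Q S where s: "s = (T,Q,S)" by (cases s)
    define T' where "T' = (\<Union>x\<in>T. Q \<inter> post X R x)"
    have inv: "T \<subseteq> S" "S \<subseteq> ?Rch" "Q \<subseteq> Q0" "Q \<inter> S = {}" "T \<subseteq> X"
       "\<forall>z\<in>?Rch - S. \<exists>t\<in>T. (t,z) \<in> (RelQ R (Q\<union>T))\<^sup>*" using Ps unfolding s P_def prod.case by blast+
    have step: "reach_step X R s = (T', Q - T', S \<union> T')"
      using s fin[OF inv(5)] by (simp add: reach_step_eq T'_def)
    have T'Q: "T' \<subseteq> Q" by (auto simp: T'_def)
    have i2: "S \<union> T' \<subseteq> ?Rch"
    proof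
      fix z assume "z \<in> S \<union> T'"
      thus "z \<in> ?Rch"
      proof
        assume "z \<in> S" thus ?thesis using inv(2) by blast
      next
        assume "z \<in> T'"
        then obtain x where x: "x \<in> T" "z \<in> Q" "(x,z) \<in> R" by (auto simp: T'_def post_def)
        then obtain t where "t \<in> closureR R V0 \<inter> Q0" "(t,x) \<in> (RelQ R Q0)\<^sup>*" using inv(1,2) x(1) by blast
        moreover have "(x,z) \<in> RelQ R Q0" using x inv(3) by (auto simp: RelQ_def)
        ultimately have "(t,z) \<in> (RelQ R Q0)\<^sup>*" "t \<in> closureR R V0 \<inter> Q0"
          by (auto intro: rtrancl.rtrancl_into_rtrancl)
        thus ?thesis by blast
      qed
    qed
    have i6: "\<forall>z\<in>?Rch - (S \<union> T'). \<exists>t\<in>T'. (t,z) \<in> (RelQ R ((Q - T')\<union>T'))\<^sup>*"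
    proof
      fix z assume z: "z \<in> ?Rch - (S \<union> T')"
      then obtain t where "t \<in> T" "(t,z) \<in> (RelQ R (Q\<union>T))\<^sup>*" using inv(6) z by blast
      thus "\<exists>t\<in>T'. (t,z) \<in> (RelQ R ((Q - T')\<union>T'))\<^sup>*"
        using reach_key[of t z R Q T T' S X, OF _ _ _ inv(1) inv(4) T'_def] z inv(3) X(4) by blast
    qed
    have i5: "T' \<subseteq> X" using T'Q inv(3) X(4) by blast
    have i134: "T' \<subseteq> S \<union> T'" "Q - T' \<subseteq> Q0" "(Q - T') \<inter> (S \<union> T') = {}" using inv(3,4) T'Q by blast+
    show "P (reach_step X R s)" unfolding step P_def prod.case
      by (intro conjI i2 i5 i6 i134)
    have "finite Q" using inv(3) X(4) fin by blast
    have "2 * card (Q - T') + (if T' = {} then 0 else 1) < 2 * card Q + (if T = {} then 0 else 1)"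
    proof (cases "T' = {}")
      case True thus ?thesis using b s by simp
    next
      case False
      have "card (Q - T') < card Q" using False T'Q \<open>finite Q\<close>
        by (metis Diff_disjoint Diff_subset Int_absorb2 psubsetI psubset_card_mono)
      thus ?thesis using False by simp
    qed
    thus "(reach_step X R s, s) \<in> measure (\<lambda>(T,Q,S). 2 * card Q + (if T = {} then 0 else 1))"
      using step s by simp
  next
    fix s assume Ps: "P s" and b: "\<not> (\<lambda>(T, Q, S). T \<noteq> {}) s"
    obtain T Q S where s: "s = (T,Q,S)" by (cases s)
    have inv: "S \<subseteq> ?Rch" "\<forall>z\<in>?Rch - S. \<exists>t\<in>T. (t,z) \<in> (RelQ R (Q\<union>T))\<^sup>*" "T = {}"
      using Ps b unfolding s P_def prod.case by blast+
    show "snd (snd s) = ?Rch" unfolding s using inv by auto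
  qed simp
  thus ?thesis by (simp add: sat_reach_def T0_def Let_def)
qed


definition Bad :: "('a \<times> 'a) set \<Rightarrow> 'a set \<Rightarrow> 'a set \<Rightarrow> 'a set" where
  "Bad R F G = {x\<in>F. \<exists>w z. (x,w) \<in> (RelQ R (F - G))\<^sup>* \<and> (w,z) \<in> R \<and> z \<notin> F \<and> z \<notin> G}"

lemma bad_step:
  assumes "a \<in> F" "(a,t) \<in> R" "t \<in> (Bad R F G - G) \<union> (X - F - G)"
  shows "a \<in> Bad R F G"
  using assms(3)
proof
  assume "t \<in> Bad R F G - G"
  then obtain w z where t: "t \<in> F" "t \<notin> G" "(t,w) \<in> (RelQ R (F - G))\<^sup>*" "(w,z) \<in> R" "z \<notin> F" "z \<notin> G"
    by (auto simp: Bad_def)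
  have "(a,t) \<in> RelQ R (F - G)" using assms(2) t by (auto simp: RelQ_def)
  hence "(a,w) \<in> (RelQ R (F - G))\<^sup>*" using t(3) by (rule converse_rtrancl_into_rtrancl)
  thus ?thesis using assms(1) t by (auto simp: Bad_def)
next
  assume "t \<in> X - F - G"
  thus ?thesis using assms(1,2) by (auto simp: Bad_def)
qed

lemma bad_final:
  assumes "(x,w) \<in> (RelQ R (F - G))\<^sup>*" "(w,z) \<in> R" "z \<notin> F" "z \<notin> G" "x \<in> V" "V \<subseteq> F"
    "\<forall>a\<in>V. \<forall>b. (a,b) \<in> R \<and> b \<notin> V \<and> b \<notin> G \<longrightarrow> False"
  shows False
  using assms(1,5)
proof (induction rule: converse_rtrancl_induct)
  case base
  thus ?case using assms(2-4,6,7) by blast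
next
  case (step x y)
  have "(x,y) \<in> R" "y \<in> F" "y \<notin> G" using step(1) by (auto simp: RelQ_def)
  thus ?case using step assms(7) by blast
qed

lemma sat_surr_eq:
  assumes X: "finite X" "R \<subseteq> X \<times> X" "F \<subseteq> X" "G \<subseteq> X"
  shows "sat_surr X R F G = F - Bad R F G"
proof -
  define P where "P = (\<lambda>(V,T). V \<subseteq> F \<and> F - V \<subseteq> Bad R F G \<and> T \<subseteq> (Bad R F G - G) \<union> (X - F - G) \<and>
     (\<forall>a\<in>V. \<forall>b. (a,b) \<in> R \<and> b \<notin> V \<and> b \<notin> G \<longrightarrow> b \<in> T))"
  have fin: "finite T" if "T \<subseteq> X" for T using X(1) finite_subset that by blast
  have BF: "Bad R F G \<subseteq> F" by (auto simp: Bad_def)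
  have "fst (while (\<lambda>(V, T). T \<noteq> {}) (surr_step X R G) (F, closureR R (F \<union> G) - (F \<union> G))) = F - Bad R F G"
  proof (rule while_rule[where P = P and r = "measure (\<lambda>(V,T). 2 * card V + (if T = {} then 0 else 1))"])
    have "closureR R (F \<union> G) \<subseteq> X" using X by (auto simp: closureR_def)
    moreover have "(a,b) \<in> R \<Longrightarrow> a \<in> F \<Longrightarrow> b \<notin> F \<Longrightarrow> b \<notin> G \<Longrightarrow> b \<in> closureR R (F \<union> G)" for a b
      by (auto simp: closureR_def)
    ultimately show "P (F, closureR R (F \<union> G) - (F \<union> G))"
      unfolding P_def prod.case by blast
  next
    fix s assume Ps: "P s" and b: "(\<lambda>(V, T). T \<noteq> {}) s"
    obtain V T where s: "s = (V,T)" by (cases s)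
    define PP where "PP = (\<Union>x\<in>T. pre X R x)"
    have inv: "V \<subseteq> F" "F - V \<subseteq> Bad R F G" "T \<subseteq> (Bad R F G - G) \<union> (X - F - G)"
       "\<forall>a\<in>V. \<forall>b. (a,b) \<in> R \<and> b \<notin> V \<and> b \<notin> G \<longrightarrow> b \<in> T"
      using Ps unfolding s P_def prod.case by blast+
    have TX: "T \<subseteq> X" using inv(3) BF X(3) by blast
    have step: "surr_step X R G s = (V - PP, (V \<inter> PP) - G)"
      using s fin[OF TX] by (simp add: surr_step_eq PP_def)
    have VPbad: "V \<inter> PP \<subseteq> Bad R F G"
    proof
      fix a assume "a \<in> V \<inter> PP"
      then obtain t where "t \<in> T" "(a,t) \<in> R" "a \<in> F" using inv(1) by (auto simp: PP_def pre_def)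
      thus "a \<in> Bad R F G" using bad_step[of a F t R G X] inv(3) by blast
    qed
    have i1: "V - PP \<subseteq> F" using inv(1) by blast
    have i2: "F - (V - PP) \<subseteq> Bad R F G" using inv(2) VPbad by blast
    have i3: "(V \<inter> PP) - G \<subseteq> (Bad R F G - G) \<union> (X - F - G)" using VPbad by blast
    have i4: "\<forall>a\<in>V - PP. \<forall>b. (a,b) \<in> R \<and> b \<notin> V - PP \<and> b \<notin> G \<longrightarrow> b \<in> (V \<inter> PP) - G"
    proof (intro ballI allI impI)
      fix a b assume a: "a \<in> V - PP" and ab: "(a,b) \<in> R \<and> b \<notin> V - PP \<and> b \<notin> G"
      have "b \<notin> T"
      proof
        assume "b \<in> T"
        hence "a \<in> PP" using ab X(2) by (auto simp: PP_def pre_def)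
        thus False using a by blast
      qed
      hence "b \<in> V" using inv(4) a ab by blast
      thus "b \<in> (V \<inter> PP) - G" using ab by blast
    qed
    show "P (surr_step X R G s)" unfolding step P_def prod.case
      by (intro conjI i1 i2 i3 i4)
    have "finite V" using inv(1) X(3) fin by blast
    have "2 * card (V - PP) + (if (V \<inter> PP) - G = {} then 0 else 1) < 2 * card V + (if T = {} then 0 else 1)"
    proof (cases "(V \<inter> PP) - G = {}")
      case True
      have "card (V - PP) \<le> card V" using \<open>finite V\<close> by (simp add: card_mono)
      thus ?thesis using b s True by simp
    next
      case False
      have "card (V - PP) < card V" using False \<open>finite V\<close>
        by (intro psubset_card_mono) auto
      thus ?thesis using False by simp
    qed
    thus "(surr_step X R G s, s) \<in> measure (\<lambda>(V,T). 2 * card V + (if T = {} then 0 else 1))"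
      using step s by simp
  next
    fix s assume Ps: "P s" and b: "\<not> (\<lambda>(V, T). T \<noteq> {}) s"
    obtain V T where s: "s = (V,T)" by (cases s)
    have inv: "V \<subseteq> F" "F - V \<subseteq> Bad R F G" "T = {}"
       "\<forall>a\<in>V. \<forall>b. (a,b) \<in> R \<and> b \<notin> V \<and> b \<notin> G \<longrightarrow> b \<in> T"
      using Ps b unfolding s P_def prod.case by blast+
    have nb: "\<forall>a\<in>V. \<forall>b. (a,b) \<in> R \<and> b \<notin> V \<and> b \<notin> G \<longrightarrow> False" using inv(3,4) by blast
    have "V \<inter> Bad R F G = {}"
    proof (rule ccontr)
      assume "V \<inter> Bad R F G \<noteq> {}"
      then obtain x w z where "x \<in> V" "(x,w) \<in> (RelQ R (F - G))\<^sup>*" "(w,z) \<in> R" "z \<notin> F" "z \<notin> G"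
        by (auto simp: Bad_def)
      thus False using bad_final[OF _ _ _ _ _ inv(1) nb] by blast
    qed
    thus "fst s = F - Bad R F G" using inv(1,2) s by auto
  qed simp
  thus ?thesis by (simp add: sat_surr_def)
qed


lemma surr_sem:
  fixes V :: "'p \<Rightarrow> 'a set" and f g :: "'p slcs"
  assumes R: "R \<subseteq> X \<times> X" and x: "x \<in> X"
  defines "F \<equiv> {y\<in>X. models X R V y f}" and "G \<equiv> {y\<in>X. models X R V y g}"
  shows "models X R V x (Surr f g) \<longleftrightarrow> x \<in> F - Bad R F G"
proof
  assume m: "models X R V x (Surr f g)"
  hence xF: "x \<in> F" using x by (simp add: F_def)
  have "x \<notin> Bad R F G"
  proof
    assume "x \<in> Bad R F G"
    then obtain w z where wz: "(x,w) \<in> (RelQ R (F - G))\<^sup>*" "(w,z) \<in> R" "z \<notin> F" "z \<notin> G"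
      by (auto simp: Bad_def)
    obtain p l where p: "is_path X R p" "p 0 = x" "p l = w" "\<forall>i. 0<i \<and> i\<le>l \<longrightarrow> p i \<in> F - G"
      using rtrancl_is_path[OF wz(1) x R] by blast
    define q where "q n = (if n \<le> l then p n else z)" for n
    have zX: "z \<in> X" using wz(2) R by blast
    have "is_path X R q" unfolding is_path_iff
    proof (intro conjI allI)
      fix n show "q n \<in> X" using p(1) zX by (simp add: q_def is_path_iff)
      show "q (Suc n) = q n \<or> (q n, q (Suc n)) \<in> R"
        using p(1,3) wz(2) unfolding is_path_iff q_def
        by (cases "Suc n \<le> l"; cases "n = l") auto
    qed
    moreover have "q 0 = x" using p(2) by (simp add: q_def)
    moreover have "\<not> models X R V (q (Suc l)) f" using wz(3) zX by (simp add: q_def F_def)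
    moreover have "\<forall>p l. is_path X R p \<and> p 0 = x \<and> \<not> models X R V (p l) f \<longrightarrow>
        (\<exists>k. 0 < k \<and> k \<le> l \<and> models X R V (p k) g)" using m by simp
    ultimately obtain k where k: "0 < k" "k \<le> Suc l" "models X R V (q k) g"
      by blast
    show False
    proof (cases "k = Suc l")
      case True thus False using k wz(4) zX by (simp add: q_def G_def)
    next
      case False
      hence "q k = p k" "p k \<in> F - G" using k p(4) by (auto simp: q_def)
      moreover have "p k \<in> X" using p(1) by (simp add: is_path_iff)
      ultimately show False using k by (simp add: G_def)
    qed
  qed
  thus "x \<in> F - Bad R F G" using xF by blast
next
  assume xb: "x \<in> F - Bad R F G"
  show "models X R V x (Surr f g)"
  proof (simp only: models.simps(6), intro conjI allI impI)
    show "models X R V x f" using xb by (simp add: F_def)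
    fix p l assume h: "is_path X R p \<and> p 0 = x \<and> \<not> models X R V (p l) f"
    have pX: "\<And>n. p n \<in> X" and pst: "\<And>n. p (Suc n) = p n \<or> (p n, p (Suc n)) \<in> R"
      using h by (auto simp: is_path_iff)
    show "\<exists>k>0. k \<le> l \<and> models X R V (p k) g"
    proof (rule ccontr)
      assume ng: "\<not> (\<exists>k>0. k \<le> l \<and> models X R V (p k) g)"
      obtain l' where l': "\<not> models X R V (p l') f" "\<forall>m<l'. models X R V (p m) f"
        using h exists_least_iff[of "\<lambda>n. \<not> models X R V (p n) f"] by blast
      have "l' \<le> l" using l' h not_le by blast
      have "l' \<noteq> 0" using l' h xb by (metis F_def DiffD1 mem_Collect_eq)
      have rt: "i < l' \<Longrightarrow> (x, p i) \<in> (RelQ R (F - G))\<^sup>*" for i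
      proof (induction i)
        case 0 thus ?case using h by simp
      next
        case (Suc i)
        have "\<not> models X R V (p (Suc i)) g" using Suc.prems ng \<open>l' \<le> l\<close> by (meson less_imp_le_nat order.trans zero_less_Suc)
        hence "p (Suc i) \<in> F - G" using Suc.prems l' pX by (auto simp: F_def G_def)
        thus ?case using Suc pst[of i]
          by (auto simp: RelQ_def intro: rtrancl.rtrancl_into_rtrancl)
      qed
      obtain j where j: "l' = Suc j" using \<open>l' \<noteq> 0\<close> not0_implies_Suc by blast
      have "(x, p j) \<in> (RelQ R (F - G))\<^sup>*" using rt j by simp
      moreover have "p j \<noteq> p l'" using l' j by auto
      hence "(p j, p l') \<in> R" using pst[of j] j by auto
      moreover have "p l' \<notin> F" "p l' \<notin> G" using l' ng \<open>l' \<le> l\<close> j by (auto simp: F_def G_def)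
      ultimately have "x \<in> Bad R F G" using xb by (auto simp: Bad_def)
      thus False using xb by blast
    qed
  qed
qed


lemma reach_sem:
  fixes V :: "'p \<Rightarrow> 'a set" and f g :: "'p slcs"
  assumes R: "R \<subseteq> X \<times> X" and x: "x \<in> X"
  defines "F \<equiv> {y\<in>X. models X R V y f}" and "G \<equiv> {y\<in>X. models X R V y g}"
  shows "models X R V x (Reach f g) \<longleftrightarrow> (\<exists>t\<in>closureR R F \<inter> G. (t,x) \<in> (RelQ R G)\<^sup>*)"
proof
  assume "models X R V x (Reach f g)"
  then obtain y p l where m: "models X R V x g" "y \<in> X" "is_path X R p" "p 0 = y" "p l = x"
     "models X R V y f" "\<forall>i. 0 < i \<and> i < l \<longrightarrow> models X R V (p i) g" by auto
  have pX: "\<And>n. p n \<in> X" and pst: "\<And>n. p (Suc n) = p n \<or> (p n, p (Suc n)) \<in> R"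
    using m(3) by (auto simp: is_path_iff)
  have xG: "x \<in> G" using m(1) x by (simp add: G_def)
  show "\<exists>t\<in>closureR R F \<inter> G. (t,x) \<in> (RelQ R G)\<^sup>*"
  proof (cases "l = 0")
    case True
    hence "x \<in> F" using m by (simp add: F_def)
    thus ?thesis using xG by (auto simp: closureR_def)
  next
    case False
    have pG: "0 < i \<Longrightarrow> i \<le> l \<Longrightarrow> p i \<in> G" for i
      using m(5,7) xG pX by (cases "i = l") (auto simp: G_def)
    have "p 1 \<in> closureR R F" using pst[of 0] m(2,4,6) by (auto simp: closureR_def F_def)
    moreover have "p 1 \<in> G" using pG False by simp
    moreover have "1 \<le> i \<Longrightarrow> i \<le> l \<Longrightarrow> (p 1, p i) \<in> (RelQ R G)\<^sup>*" for i
    proof (induction i)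
      case 0 thus ?case by simp
    next
      case (Suc i)
      show ?case
      proof (cases "i = 0")
        case True thus ?thesis by simp
      next
        case False
        hence "(p 1, p i) \<in> (RelQ R G)\<^sup>*" using Suc by simp
        moreover have "p (Suc i) \<in> G" using pG Suc.prems by simp
        ultimately show ?thesis using pst[of i]
          by (auto simp: RelQ_def intro: rtrancl.rtrancl_into_rtrancl)
      qed
    qed
    hence "(p 1, p l) \<in> (RelQ R G)\<^sup>*" using False by simp
    hence "(p 1, x) \<in> (RelQ R G)\<^sup>*" using m(5) by simp
    ultimately show ?thesis by blast
  qed
next
  assume "\<exists>t\<in>closureR R F \<inter> G. (t,x) \<in> (RelQ R G)\<^sup>*"
  then obtain t where t: "t \<in> closureR R F" "t \<in> G" "(t,x) \<in> (RelQ R G)\<^sup>*" by blast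
  have tX: "t \<in> X" using t(2) by (simp add: G_def)
  obtain p l where p: "is_path X R p" "p 0 = t" "p l = x" "\<forall>i. 0<i \<and> i\<le>l \<longrightarrow> p i \<in> G"
    using rtrancl_is_path[OF t(3) tX R] by blast
  have xg: "models X R V x g"
  proof (cases "l = 0")
    case True thus ?thesis using p t(2) by (simp add: G_def)
  next
    case False thus ?thesis using p(3,4) by (auto simp: G_def)
  qed
  have pX: "\<And>n. p n \<in> X" and pst: "\<And>n. p (Suc n) = p n \<or> (p n, p (Suc n)) \<in> R"
    using p(1) by (auto simp: is_path_iff)
  from t(1) show "models X R V x (Reach f g)"
  proof (cases "t \<in> F")
    case True
    have "\<forall>i. 0 < i \<and> i < l \<longrightarrow> models X R V (p i) g" using p(4) by (auto simp: G_def)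
    thus ?thesis using xg True p tX by (auto simp: F_def)
  next
    case False
    then obtain v where v: "v \<in> F" "(v,t) \<in> R" using t(1) by (auto simp: closureR_def)
    define q where "q n = (if n = 0 then v else p (n - 1))" for n
    have vX: "v \<in> X" using v by (simp add: F_def)
    have "is_path X R q" unfolding is_path_iff
    proof (intro conjI allI)
      fix n show "q n \<in> X" using pX vX by (simp add: q_def)
      show "q (Suc n) = q n \<or> (q n, q (Suc n)) \<in> R"
        using pst[of "n - 1"] v p(2) by (cases n) (auto simp: q_def)
    qed
    moreover have "q 0 = v" "q (Suc l) = x" using p(3) by (auto simp: q_def)
    moreover have "\<forall>i. 0 < i \<and> i < Suc l \<longrightarrow> models X R V (q i) g"
    proof (intro allI impI)
      fix i assume i: "0 < i \<and> i < Suc l"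
      have "p (i - 1) \<in> G" using p(2,4) t(2) i by (cases "i = 1") auto
      thus "models X R V (q i) g" using i by (simp add: q_def G_def)
    qed
    moreover have "models X R V v f" using v by (simp add: F_def)
    ultimately show ?thesis using xg vX by (simp only: models.simps(7)) blast
  qed
qed

lemma Sat_eq:
  assumes "qdcm X R V"
  shows "Sat X R V \<phi> = {x\<in>X. models X R V x \<phi>}"
proof -
  have X: "finite X" "R \<subseteq> X \<times> X" "\<And>a. V a \<subseteq> X" using assms by (auto simp: qdcm_def)
  show ?thesis
  proof (induction \<phi>)
    case (Atom a) thus ?case using X(3)[of a] by auto
  next
    case Top thus ?case by simp
  next
    case (Neg f) thus ?case by auto
  next
    case (And f g) thus ?case by auto
  next
    case (Near f)
    have "closureR R {x\<in>X. models X R V x f} \<subseteq> X" using X(2) by (auto simp: closureR_def)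
    thus ?case using Near by auto
  next
    case (Surr f g)
    have "Sat X R V (Surr f g) = {y\<in>X. models X R V y f} - Bad R {y\<in>X. models X R V y f} {y\<in>X. models X R V y g}"
      using Surr sat_surr_eq[OF X(1,2)] by simp
    thus ?case using surr_sem[OF X(2)] by blast
  next
    case (Reach f g)
    have S1: "Sat X R V (Reach f g) = {z. \<exists>t\<in>closureR R {y\<in>X. models X R V y f} \<inter> {y\<in>X. models X R V y g}.
        (t,z) \<in> (RelQ R {y\<in>X. models X R V y g})\<^sup>*}"
      using Reach sat_reach_eq[OF X(1,2)] by simp
    have S2: "(t,z) \<in> (RelQ R G)\<^sup>* \<Longrightarrow> t \<in> X \<Longrightarrow> z \<in> X" for t z G
      by (induction rule: rtrancl_induct) (use X(2) in \<open>auto simp: RelQ_def\<close>)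
    show ?case
    proof (intro set_eqI iffI)
      fix z assume "z \<in> Sat X R V (Reach f g)"
      then obtain t where t: "t\<in>closureR R {y\<in>X. models X R V y f} \<inter> {y\<in>X. models X R V y g}"
        "(t,z) \<in> (RelQ R {y\<in>X. models X R V y g})\<^sup>*" using S1 by blast
      have "z \<in> X" using S2[OF t(2)] t(1) by blast
      thus "z \<in> {x\<in>X. models X R V x (Reach f g)}" using reach_sem[OF X(2), of z V f g] t by blast
    next
      fix z assume "z \<in> {x\<in>X. models X R V x (Reach f g)}"
      thus "z \<in> Sat X R V (Reach f g)" using reach_sem[OF X(2), of z V f g] S1 by blast
    qed
  qed
qed

theorem theorem6p3:
  fixes X :: "'a set" and R :: "('a \<times> 'a) set" and V :: "'p \<Rightarrow> 'a set"
    and \<phi> :: "'p slcs" and x :: 'a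
  assumes "qdcm X R V" and "x \<in> X"
  shows "x \<in> Sat X R V \<phi> \<longleftrightarrow> models X R V x \<phi>"
  using Sat_eq[OF assms(1)] assms(2) by blast

end
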